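(* There is an absolute constant $c>0$ such that for every integer $d\ge2$ and every $d$-decomposable permutation $X=(x_1,\dots,x_n)$ of $[n]$ (viewed as an access sequence of length $n$), $\mathsf{F}^{1}(X)\le c\,\log d\cdot |X|$.
   Context: $\log(x)=\log_2(\max\{2,x\})$. For a permutation $\sigma=(\sigma(1),\dots,\sigma(n))$, an interval $[a,b]$ with $1\le a\le b\le n$ is a block if $\{\sigma(a),\dots,\sigma(b)\}=\{c,c+1,\dots,e\}$ for some integers $c\le e$. A block partition of $\sigma$ is a partition of the positions $[n]$ into consecutive blocks $[a_1,b_1],\dots,[a_j,b_j]$; $\sigma_i$ is the permutation order-isomorphic to $\sigma$ restricted to $[a_i,b_i]$, and the skeleton $\tilde\sigma$ is the permutation of $[j]$ order-isomorphic to $(\sigma(q_1),\dots,\sigma(q_j))$ for any $q_i\in[a_i,b_i]$; we write $\sigma=\tilde\sigma[\sigma_1,\dots,\sigma_j]$. A permutation is $d$-decomposable if it is $(1)$, or $\sigma=\tilde\sigma[\sigma_1,\dots,\sigma_{j}]$ for some block partition into $2\le j\le d$ blocks with each $\sigma_i$ $d$-decomposable. One-finger cost: for a static BST $T$ on $[n]$ with $d_T(a,b)$ the number of edges between $a$ and $b$, a single finger starting at some node $\ell_1$ moves to each $x_t$ in turn; cost $\sum_{t=1}^n(1+d_T(x_t,x_{t-1}))$ with $x_0=\ell_1$. $\mathsf{F}^1(X)$ is the minimum over $T$ and $\ell_1$. *)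

theory Defs
  imports Complex_Main "HOL-Library.Tree"
begin

definition logp :: "real \<Rightarrow> real" where
  "logp x = log 2 (max 2 x)"

definition is_perm :: "nat list \<Rightarrow> bool" where
  "is_perm xs \<longleftrightarrow> distinct xs \<and> set xs = {1..length xs}"

text \<open>Standardisation: the permutation of [k] order-isomorphic to a list of distinct numbers.\<close>
definition std :: "nat list \<Rightarrow> nat list" where
  "std xs = map (\<lambda>x. card {y \<in> set xs. y \<le> x}) xs"

definition is_value_interval :: "nat set \<Rightarrow> bool" where
  "is_value_interval A \<longleftrightarrow> (\<exists>c e. c \<le> e \<and> A = {c..e})"

text \<open>d-decomposable permutations: (1), or sigma = skeleton[sigma_1,...,sigma_j] for a block
  partition into 2 \<le> j \<le> d consecutive blocks (each block a nonempty run of positions whose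
  values form an interval), each sigma_i (pattern of the block) being d-decomposable.\<close>
inductive decomposable :: "nat \<Rightarrow> nat list \<Rightarrow> bool" for d :: nat where
  single: "decomposable d [1]"
| split: "\<lbrakk> concat bs = xs; 2 \<le> length bs; length bs \<le> d;
           \<forall>b\<in>set bs. b \<noteq> [] \<and> is_value_interval (set b) \<and> decomposable d (std b) \<rbrakk>
          \<Longrightarrow> decomposable d xs"

fun tedges :: "'a tree \<Rightarrow> ('a \<times> 'a) set" where
  "tedges Leaf = {}"
| "tedges (Node l x r) = tedges l \<union> tedges r
     \<union> (case l of Leaf \<Rightarrow> {} | Node _ y _ \<Rightarrow> {(x,y),(y,x)})
     \<union> (case r of Leaf \<Rightarrow> {} | Node _ y _ \<Rightarrow> {(x,y),(y,x)})"

definition tdist :: "'a tree \<Rightarrow> 'a \<Rightarrow> 'a \<Rightarrow> nat" where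
  "tdist t a b = (LEAST k. (a, b) \<in> tedges t ^^ k)"

definition finger_cost :: "nat tree \<Rightarrow> nat \<Rightarrow> nat list \<Rightarrow> nat" where
  "finger_cost t l xs = sum_list (map (\<lambda>(p, q). 1 + tdist t q p) (zip (l # xs) xs))"

definition F1 :: "nat list \<Rightarrow> nat" where
  "F1 xs = Inf {finger_cost t l xs | t l. bst t \<and> set_tree t = {1..length xs} \<and> l \<in> set_tree t}"

end

theory Submission
  imports Defs
begin


definition rv :: "'a tree \<Rightarrow> 'a" where "rv t = (case t of Node _ x _ \<Rightarrow> x | Leaf \<Rightarrow> undefined)"

lemma rv_Node[simp]: "rv (Node l x r) = x" by (simp add: rv_def)

lemma rv_in: "t \<noteq> Leaf \<Longrightarrow> rv t \<in> set_tree t"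
  by (cases t) auto

lemma tedges_sub_l: "tedges l \<subseteq> tedges (Node l x r)" by auto
lemma tedges_sub_r: "tedges r \<subseteq> tedges (Node l x r)" by auto
lemma tedges_edge_l: "l \<noteq> Leaf \<Longrightarrow> (x, rv l) \<in> tedges (Node l x r)"
  by (cases l) auto
lemma tedges_edge_r: "r \<noteq> Leaf \<Longrightarrow> (x, rv r) \<in> tedges (Node l x r)"
  by (cases r) auto

lemma tedges_set: "(u,v) \<in> tedges t \<Longrightarrow> u \<in> set_tree t \<and> v \<in> set_tree t"
proof (induction t)
  case (Node l x r) then show ?case by (cases l; cases r) auto
qed simp

lemma tedges_sym: "(u,v) \<in> tedges t \<Longrightarrow> (v,u) \<in> tedges t"
proof (induction t)
  case (Node l x r) then show ?case by (cases l; cases r) auto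
qed simp

lemma sym_tedges: "sym (tedges t)"
  by (rule symI) (rule tedges_sym)

lemma relpow_sym: "sym R \<Longrightarrow> (a,b) \<in> R ^^ n \<Longrightarrow> (b,a) \<in> R ^^ n"
proof (induction n arbitrary: b)
  case 0 then show ?case by auto
next
  case (Suc n)
  then obtain y where "(a,y) \<in> R ^^ n" "(y,b) \<in> R" by (auto elim: relpow_Suc_E)
  then show ?case using Suc by (metis relpow_Suc_I2 symD)
qed

lemma tdist_sym: "tdist t a b = tdist t b a"
proof -
  have "(\<lambda>k. (a, b) \<in> tedges t ^^ k) = (\<lambda>k. (b, a) \<in> tedges t ^^ k)"
    by (intro ext iffI; erule relpow_sym[OF sym_tedges])
  then show ?thesis by (simp add: tdist_def)
qed

lemma tdist_le: "(a,b) \<in> tedges t ^^ k \<Longrightarrow> tdist t a b \<le> k"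
  unfolding tdist_def by (rule Least_le)

lemma tdist_refl: "tdist t a a = 0"
  using tdist_le[OF relpow_0_I[of a "tedges t"]] by auto

lemma tdist_edge: "(a,b) \<in> tedges t \<Longrightarrow> tdist t a b \<le> 1"
proof -
  assume "(a,b) \<in> tedges t"
  then have "(a,b) \<in> tedges t ^^ 1" by simp
  then show ?thesis by (rule tdist_le)
qed

lemma conn_root: "a \<in> set_tree t \<Longrightarrow> (rv t, a) \<in> (tedges t)\<^sup>*"
proof (induction t)
  case Leaf then show ?case by simp
next
  case (Node l x r)
  show ?case
  proof (cases "a = x")
    case True then show ?thesis by simp
  next
    case False
    then have "a \<in> set_tree l \<or> a \<in> set_tree r" using Node.prems by auto
    then show ?thesis
    proof
      assume a: "a \<in> set_tree l"
      then have "l \<noteq> Leaf" by auto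
      have "(rv l, a) \<in> (tedges (Node l x r))\<^sup>*"
        using rtrancl_mono[OF tedges_sub_l] Node.IH(1)[OF a] by (rule subsetD)
      moreover have "(x, rv l) \<in> tedges (Node l x r)" using tedges_edge_l[OF \<open>l \<noteq> Leaf\<close>] .
      ultimately show ?thesis by (simp add: converse_rtrancl_into_rtrancl)
    next
      assume a: "a \<in> set_tree r"
      then have "r \<noteq> Leaf" by auto
      have "(rv r, a) \<in> (tedges (Node l x r))\<^sup>*"
        using rtrancl_mono[OF tedges_sub_r] Node.IH(2)[OF a] by (rule subsetD)
      moreover have "(x, rv r) \<in> tedges (Node l x r)" using tedges_edge_r[OF \<open>r \<noteq> Leaf\<close>] .
      ultimately show ?thesis by (simp add: converse_rtrancl_into_rtrancl)
    qed
  qed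
qed

lemma conn: "a \<in> set_tree t \<Longrightarrow> b \<in> set_tree t \<Longrightarrow> (a, b) \<in> (tedges t)\<^sup>*"
proof -
  assume a: "a \<in> set_tree t" and b: "b \<in> set_tree t"
  have "(rv t, a) \<in> (tedges t)\<^sup>*" by (rule conn_root[OF a])
  then have "(a, rv t) \<in> (tedges t)\<^sup>*" by (rule symD[OF sym_rtrancl[OF sym_tedges]])
  then show ?thesis using conn_root[OF b] by (rule rtrancl_trans)
qed

lemma tdist_path: "a \<in> set_tree t \<Longrightarrow> b \<in> set_tree t \<Longrightarrow> (a, b) \<in> tedges t ^^ tdist t a b"
proof -
  assume "a \<in> set_tree t" "b \<in> set_tree t"
  then have "(a, b) \<in> (tedges t)\<^sup>*" by (rule conn)
  then obtain n where "(a, b) \<in> tedges t ^^ n" unfolding rtrancl_power by (elim exE)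
  then show ?thesis unfolding tdist_def by (rule LeastI)
qed

lemma tdist_tri: "a \<in> set_tree t \<Longrightarrow> b \<in> set_tree t \<Longrightarrow> c \<in> set_tree t \<Longrightarrow>
   tdist t a c \<le> tdist t a b + tdist t b c"
proof -
  assume h: "a \<in> set_tree t" "b \<in> set_tree t" "c \<in> set_tree t"
  have "(a, c) \<in> tedges t ^^ tdist t a b O tedges t ^^ tdist t b c"
    by (rule relcompI[OF tdist_path[OF h(1,2)] tdist_path[OF h(2,3)]])
  then have "(a, c) \<in> tedges t ^^ (tdist t a b + tdist t b c)"
    by (simp only: relpow_add)
  then show ?thesis by (rule tdist_le)
qed

lemma hom_relpow:
  assumes "\<forall>(u,v)\<in>tedges t. (f u, f v) \<in> tedges t' \<or> f u = f v"
  shows "(a,b) \<in> tedges t ^^ n \<Longrightarrow> \<exists>m\<le>n. (f a, f b) \<in> tedges t' ^^ m"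
proof (induction n arbitrary: b)
  case 0 then have "a = b" by (rule relpow_0_E)
  then show ?case by (intro exI[of _ 0]) simp
next
  case (Suc n)
  obtain y where y: "(a,y) \<in> tedges t ^^ n" "(y,b) \<in> tedges t" by (rule relpow_Suc_E[OF Suc.prems])
  obtain m where m: "m \<le> n" "(f a, f y) \<in> tedges t' ^^ m" using Suc.IH[OF y(1)] by (elim exE conjE)
  have "(f y, f b) \<in> tedges t' \<or> f y = f b" using bspec[OF assms y(2)] by simp
  then show ?case
  proof
    assume "(f y, f b) \<in> tedges t'"
    then have "(f a, f b) \<in> tedges t' ^^ Suc m" by (rule relpow_Suc_I[OF m(2)])
    then show ?thesis using m(1) by (intro exI[of _ "Suc m"]) simp
  next
    assume "f y = f b" then show ?thesis using m by (intro exI[of _ m]) simp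
  qed
qed

lemma hom_dist:
  assumes "\<forall>(u,v)\<in>tedges t. (f u, f v) \<in> tedges t' \<or> f u = f v"
    and "a \<in> set_tree t" "b \<in> set_tree t"
  shows "tdist t' (f a) (f b) \<le> tdist t a b"
proof -
  obtain m where m: "m \<le> tdist t a b" "(f a, f b) \<in> tedges t' ^^ m"
    using hom_relpow[OF assms(1) tdist_path[OF assms(2,3)]] by (elim exE conjE)
  have "tdist t' (f a) (f b) \<le> m" by (rule tdist_le[OF m(2)])
  then show ?thesis using m(1) by simp
qed

lemma sub_dist:
  assumes "tedges t \<subseteq> tedges t'" "a \<in> set_tree t" "b \<in> set_tree t"
  shows "tdist t' a b \<le> tdist t a b"
proof -
  have "\<forall>(u,v)\<in>tedges t. (id u, id v) \<in> tedges t' \<or> id u = id v" using assms(1) by auto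
  from hom_dist[OF this assms(2,3)] show ?thesis by simp
qed



fun pathcost :: "nat tree \<Rightarrow> nat list \<Rightarrow> nat" where
  "pathcost t [] = 0"
| "pathcost t [x] = 0"
| "pathcost t (x # y # zs) = tdist t x y + pathcost t (y # zs)"

lemma pc_app: "xs \<noteq> [] \<Longrightarrow> ys \<noteq> [] \<Longrightarrow>
   pathcost t (xs @ ys) = pathcost t xs + tdist t (last xs) (hd ys) + pathcost t ys"
proof (induction xs rule: pathcost.induct)
  case (2 t x) then show ?case by (cases ys) auto
next
  case (3 t x y zs) then show ?case by auto
qed auto

lemma pc_mono_app: "pathcost t xs \<le> pathcost t (xs @ ys)"
proof (cases "xs = [] \<or> ys = []")
  case True then show ?thesis by auto
next
  case False then show ?thesis using pc_app[of xs ys t] by auto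
qed

lemma finger_cost_pc: "finger_cost t l xs = length xs + pathcost t (l # xs)"
proof (induction xs arbitrary: l)
  case Nil then show ?case by (simp add: finger_cost_def)
next
  case (Cons x xs)
  have "finger_cost t l (x # xs) = 1 + tdist t x l + finger_cost t x xs"
    by (simp add: finger_cost_def)
  then show ?case using Cons by (simp add: tdist_sym)
qed

lemma pc_transfer0:
  assumes "\<forall>x\<in>set zs. \<forall>y\<in>set zs. tdist t' x y \<le> tdist t x y + D * ((if x = e then 1 else 0) + (if y = e then 1 else 0))"
  shows "pathcost t' zs + D * (if zs \<noteq> [] \<and> hd zs = e then 1 else 0) \<le> pathcost t zs + 2 * D * count_list zs e"
  using assms
proof (induction zs rule: induct_list012)
  case (3 x y zs)
  have h: "tdist t' x y \<le> tdist t x y + D * ((if x = e then 1 else 0) + (if y = e then 1 else 0))"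
    using "3.prems" by simp
  have ih: "pathcost t' (y # zs) + D * (if y = e then 1 else 0) \<le> pathcost t (y # zs) + 2 * D * count_list (y # zs) e"
    using "3.IH"(2) "3.prems" by simp
  have c: "count_list (x # y # zs) e = (if x = e then 1 else 0) + count_list (y # zs) e" by simp
  show ?case using h ih unfolding c by (simp add: algebra_simps)
qed auto

lemma pc_transfer:
  assumes "\<forall>x\<in>set zs. \<forall>y\<in>set zs. tdist t' x y \<le> tdist t x y + D * ((if x = e then 1 else 0) + (if y = e then 1 else 0))"
  shows "pathcost t' zs \<le> pathcost t zs + 2 * D * count_list zs e"
  using pc_transfer0[OF assms] by simp

lemma pc_concat:
  assumes "\<forall>b\<in>set bs. b \<noteq> [] \<and> set b \<subseteq> set_tree t \<and> \<alpha> b \<in> set_tree t"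
    and "r \<in> set_tree t" "s \<in> set_tree t"
    and "\<forall>x\<in>{r, s} \<union> \<alpha> ` set bs. \<forall>y\<in>{r, s} \<union> \<alpha> ` set bs. tdist t x y \<le> B"
  shows "pathcost t (r # concat bs @ [s]) \<le> sum_list (map (\<lambda>b. pathcost t (\<alpha> b # b @ [\<alpha> b])) bs) + (length bs + 1) * B"
  using assms
proof (induction bs arbitrary: r)
  case Nil then show ?case by simp
next
  case (Cons b bs)
  let ?a = "\<alpha> b"
  let ?rest = "concat bs @ [s]"
  have bne: "b \<noteq> []" and bsub: "set b \<subseteq> set_tree t" and ain: "?a \<in> set_tree t" using Cons.prems by auto
  have restsub: "set ?rest \<subseteq> set_tree t" using Cons.prems by auto
  have hdb: "hd b \<in> set_tree t" "last b \<in> set_tree t" using bne bsub by auto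
  have "hd ?rest \<in> set ?rest" by (rule hd_in_set) simp
  then have hdr: "hd ?rest \<in> set_tree t" using restsub by blast
  have e1: "pathcost t (r # concat (b # bs) @ [s]) = tdist t r (hd b) + pathcost t b + tdist t (last b) (hd ?rest) + pathcost t ?rest"
  proof -
    have "r # concat (b # bs) @ [s] = ([r] @ b) @ ?rest" by simp
    then have "pathcost t (r # concat (b # bs) @ [s]) = pathcost t ([r] @ b) + tdist t (last b) (hd ?rest) + pathcost t ?rest"
      using pc_app[of "[r] @ b" ?rest t] bne by simp
    moreover have "pathcost t ([r] @ b) = tdist t r (hd b) + pathcost t b"
      using pc_app[of "[r]" b t] bne by simp
    ultimately show ?thesis by simp
  qed
  have e2: "pathcost t (?a # b @ [?a]) = tdist t ?a (hd b) + pathcost t b + tdist t (last b) ?a"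
    using pc_app[of "[?a]" "b @ [?a]" t] pc_app[of b "[?a]" t] bne by simp
  have e3: "pathcost t (?a # ?rest) = tdist t ?a (hd ?rest) + pathcost t ?rest"
    using pc_app[of "[?a]" ?rest t] by simp
  have t1: "tdist t r (hd b) \<le> tdist t r ?a + tdist t ?a (hd b)"
    by (rule tdist_tri) (use Cons.prems(2) hdb ain in simp_all)
  have t2: "tdist t (last b) (hd ?rest) \<le> tdist t (last b) ?a + tdist t ?a (hd ?rest)"
    by (rule tdist_tri) (use hdb ain hdr in simp_all)
  have P: "\<And>x y. x \<in> {r, s} \<union> \<alpha> ` set (b # bs) \<Longrightarrow> y \<in> {r, s} \<union> \<alpha> ` set (b # bs) \<Longrightarrow> tdist t x y \<le> B"
    using Cons.prems(4) by blast
  have ra: "tdist t r ?a \<le> B" by (rule P) simp_all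
  have ih: "pathcost t (?a # ?rest) \<le> sum_list (map (\<lambda>b. pathcost t (\<alpha> b # b @ [\<alpha> b])) bs) + (length bs + 1) * B"
  proof (rule Cons.IH)
    show "\<forall>b\<in>set bs. b \<noteq> [] \<and> set b \<subseteq> set_tree t \<and> \<alpha> b \<in> set_tree t" using Cons.prems(1) by simp
    show "?a \<in> set_tree t" by (rule ain)
    show "s \<in> set_tree t" by (rule Cons.prems(3))
    have sub: "{?a, s} \<union> \<alpha> ` set bs \<subseteq> {r, s} \<union> \<alpha> ` set (b # bs)" by auto
    show "\<forall>x\<in>{?a, s} \<union> \<alpha> ` set bs. \<forall>y\<in>{?a, s} \<union> \<alpha> ` set bs. tdist t x y \<le> B"
    proof (intro ballI)
      fix x y assume "x \<in> {?a, s} \<union> \<alpha> ` set bs" "y \<in> {?a, s} \<union> \<alpha> ` set bs"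
      then show "tdist t x y \<le> B" by (intro P) auto
    qed
  qed
  show ?case using e1 e2 e3 t1 t2 ra ih by simp
qed



definition shp :: "nat tree \<Rightarrow> bool" where
  "shp t \<longleftrightarrow> (\<exists>m. t = Node Leaf m Leaf) \<or> (\<exists>m M x. t = Node Leaf m (Node M x Leaf))"

definition hang :: "nat tree \<Rightarrow> nat tree \<Rightarrow> nat tree \<Rightarrow> nat tree" where
  "hang t L R = (case t of Node _ x S \<Rightarrow> (case S of Leaf \<Rightarrow> Node L x R | Node M y _ \<Rightarrow> Node L x (Node M y R)) | Leaf \<Rightarrow> Leaf)"

lemma hang1[simp]: "hang (Node Leaf m Leaf) L R = Node L m R" by (simp add: hang_def)
lemma hang2[simp]: "hang (Node Leaf m (Node M x Leaf)) L R = Node L m (Node M x R)" by (simp add: hang_def)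

lemma tedges_Node_l: "tedges (Node Leaf m S) = tedges S \<union> (case S of Leaf \<Rightarrow> {} | Node _ y _ \<Rightarrow> {(m,y),(y,m)})"
  by simp

lemma hang_props:
  assumes "shp t" "bst t" "bst L" "bst R"
    "\<forall>x\<in>set_tree L. \<forall>y\<in>set_tree t. x < y" "\<forall>x\<in>set_tree t. \<forall>y\<in>set_tree R. x < y"
  shows "bst (hang t L R)" "set_tree (hang t L R) = set_tree L \<union> set_tree t \<union> set_tree R"
    "tedges t \<subseteq> tedges (hang t L R)" "tedges L \<subseteq> tedges (hang t L R)" "tedges R \<subseteq> tedges (hang t L R)"
    "rv (hang t L R) = rv t"
    "L \<noteq> Leaf \<Longrightarrow> tdist (hang t L R) (rv t) (rv L) \<le> 2"
    "R \<noteq> Leaf \<Longrightarrow> tdist (hang t L R) (rv t) (rv R) \<le> 2"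
proof -
  from assms(1) consider (a) m where "t = Node Leaf m Leaf" | (b) m M x where "t = Node Leaf m (Node M x Leaf)"
    unfolding shp_def by blast
  note cs = this
  show "bst (hang t L R)" using cs assms by cases auto
  show "set_tree (hang t L R) = set_tree L \<union> set_tree t \<union> set_tree R" using cs by cases auto
  show "tedges L \<subseteq> tedges (hang t L R)" using cs by cases auto
  show "rv (hang t L R) = rv t" using cs by cases auto
  show "tedges R \<subseteq> tedges (hang t L R)"
    using cs proof cases
    case a then show ?thesis by auto
  next
    case b
    have "tedges R \<subseteq> tedges (Node M x R)" by (rule tedges_sub_r)
    also have "\<dots> \<subseteq> tedges (Node L m (Node M x R))" by (rule tedges_sub_r)
    finally show ?thesis using b by simp
  qed
  show "tedges t \<subseteq> tedges (hang t L R)"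
    using cs proof cases
    case a then show ?thesis by simp
  next
    case b
    have "tedges (Node M x Leaf) \<subseteq> tedges (Node M x R)" by (cases M) auto
    then show ?thesis using b by auto
  qed
  show "L \<noteq> Leaf \<Longrightarrow> tdist (hang t L R) (rv t) (rv L) \<le> 2"
  proof -
    assume L: "L \<noteq> Leaf"
    from cs show ?thesis
    proof cases
      case a
      have "(m, rv L) \<in> tedges (Node L m R)" by (rule tedges_edge_l[OF L])
      then have "tdist (Node L m R) m (rv L) \<le> 1" by (rule tdist_edge)
      then show ?thesis using a by simp
    next
      case b
      have "(m, rv L) \<in> tedges (Node L m (Node M x R))" by (rule tedges_edge_l[OF L])
      then have "tdist (Node L m (Node M x R)) m (rv L) \<le> 1" by (rule tdist_edge)
      then show ?thesis using b by simp
    qed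
  qed
  show "R \<noteq> Leaf \<Longrightarrow> tdist (hang t L R) (rv t) (rv R) \<le> 2"
  proof -
    assume R: "R \<noteq> Leaf"
    from cs show ?thesis
    proof cases
      case a
      have "(m, rv R) \<in> tedges (Node L m R)" by (rule tedges_edge_r[OF R])
      then have "tdist (Node L m R) m (rv R) \<le> 1" by (rule tdist_edge)
      then show ?thesis using a by simp
    next
      case b
      let ?T = "Node L m (Node M x R)"
      have e1: "(m, x) \<in> tedges ?T" using tedges_edge_r[of "Node M x R" m L] by simp
      have "(x, rv R) \<in> tedges (Node M x R)" by (rule tedges_edge_r[OF R])
      then have e2: "(x, rv R) \<in> tedges ?T" using tedges_sub_r[of "Node M x R" L m] by (rule subsetD[rotated])
      have e3: "(x, rv R) \<in> tedges ?T ^^ 1" using e2 by (simp only: relpow_1)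
      have "(m, rv R) \<in> tedges ?T ^^ Suc 1" by (rule relpow_Suc_I2[OF e1 e3])
      then have "tdist ?T m (rv R) \<le> Suc 1" by (rule tdist_le)
      then show ?thesis using b by simp
    qed
  qed
qed

function glue :: "nat tree list \<Rightarrow> nat tree" where
  "glue ts = (if ts = [] then Leaf else
     hang (ts ! (length ts div 2)) (glue (take (length ts div 2) ts)) (glue (drop (Suc (length ts div 2)) ts)))"
  by pat_completeness auto
termination by (relation "measure length") auto

declare glue.simps[simp del]

definition lt_tree :: "nat tree \<Rightarrow> nat tree \<Rightarrow> bool" where
  "lt_tree s t \<longleftrightarrow> (\<forall>x\<in>set_tree s. \<forall>y\<in>set_tree t. x < y)"

lemma glue_props:
  "(\<forall>t\<in>set ts. shp t \<and> bst t) \<Longrightarrow> sorted_wrt lt_tree ts \<Longrightarrow>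
   bst (glue ts) \<and> set_tree (glue ts) = (\<Union>t\<in>set ts. set_tree t) \<and> (\<forall>t\<in>set ts. tedges t \<subseteq> tedges (glue ts))
   \<and> (\<forall>t\<in>set ts. \<exists>k. 2 ^ k \<le> length ts \<and> tdist (glue ts) (rv (glue ts)) (rv t) \<le> 2 * k)"
proof (induction ts rule: glue.induct)
  case (1 ts)
  show ?case
  proof (cases "ts = []")
    case True then show ?thesis by (simp add: glue.simps)
  next
    case False
    define k where "k = length ts div 2"
    define L where "L = glue (take k ts)"
    define R where "R = glue (drop (Suc k) ts)"
    define p where "p = ts ! k"
    define A where "A = take k ts"
    define B where "B = drop (Suc k) ts"
    have kl: "k < length ts" using False k_def by auto
    have g: "glue ts = hang p L R" using False by (simp add: glue.simps[of ts] k_def L_def R_def p_def Let_def)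
    have decomp: "ts = A @ p # B" using kl unfolding p_def A_def B_def by (simp add: id_take_nth_drop)
    have sw: "sorted_wrt lt_tree (A @ p # B)" using "1.prems"(2) decomp by simp
    have setts: "set ts = set A \<union> {p} \<union> set B" using decomp by (metis Un_insert_right insert_is_Un list.simps(15) set_append sup_commute)
    have swA: "sorted_wrt lt_tree A" and swB: "sorted_wrt lt_tree B"
      and ltAp: "\<forall>u\<in>set A. lt_tree u p" and ltpB: "\<forall>u\<in>set B. lt_tree p u"
      and ltAB: "\<forall>u\<in>set A. \<forall>v\<in>set B. lt_tree u v"
      using sw unfolding sorted_wrt_append by auto
    have pA: "\<forall>t\<in>set A. shp t \<and> bst t" using "1.prems"(1) setts by blast
    have pB: "\<forall>t\<in>set B. shp t \<and> bst t" using "1.prems"(1) setts by blast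
    have ihL: "bst L \<and> set_tree L = (\<Union>t\<in>set A. set_tree t) \<and> (\<forall>t\<in>set A. tedges t \<subseteq> tedges L)
      \<and> (\<forall>t\<in>set A. \<exists>j. 2 ^ j \<le> length A \<and> tdist L (rv L) (rv t) \<le> 2 * j)"
      unfolding L_def A_def k_def using False pA swA unfolding A_def k_def by (intro "1.IH"(1))
    have ihR: "bst R \<and> set_tree R = (\<Union>t\<in>set B. set_tree t) \<and> (\<forall>t\<in>set B. tedges t \<subseteq> tedges R)
      \<and> (\<forall>t\<in>set B. \<exists>j. 2 ^ j \<le> length B \<and> tdist R (rv R) (rv t) \<le> 2 * j)"
      unfolding R_def B_def k_def using False pB swB unfolding B_def k_def by (intro "1.IH"(2))
    have sp: "shp p" "bst p" using "1.prems"(1) setts by auto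
    have ltL: "\<forall>x\<in>set_tree L. \<forall>y\<in>set_tree p. x < y"
    proof (intro ballI)
      fix x y assume x: "x \<in> set_tree L" and y: "y \<in> set_tree p"
      from x ihL obtain u where u: "u \<in> set A" "x \<in> set_tree u" by blast
      then have "lt_tree u p" using ltAp by blast
      then show "x < y" using u(2) y unfolding lt_tree_def by blast
    qed
    have ltR: "\<forall>x\<in>set_tree p. \<forall>y\<in>set_tree R. x < y"
    proof (intro ballI)
      fix x y assume x: "x \<in> set_tree p" and y: "y \<in> set_tree R"
      from y ihR obtain u where u: "u \<in> set B" "y \<in> set_tree u" by blast
      then have "lt_tree p u" using ltpB by blast
      then show "x < y" using u(2) x unfolding lt_tree_def by blast
    qed
    note H = hang_props[OF sp(1) sp(2) conjunct1[OF ihL] conjunct1[OF ihR] ltL ltR]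
    have pne: "p \<noteq> Leaf" using sp(1) by (auto simp: shp_def)
    have lenL: "2 * length A \<le> length ts" using kl k_def A_def by auto
    have lenR: "2 * length B \<le> length ts" using kl k_def B_def by auto
    have gp: "rv (glue ts) = rv p" using g H(6) by simp
    have dist: "\<forall>t\<in>set ts. \<exists>j. 2 ^ j \<le> length ts \<and> tdist (glue ts) (rv (glue ts)) (rv t) \<le> 2 * j"
    proof
      fix t assume tin: "t \<in> set ts"
      consider "t = p" | "t \<in> set A" | "t \<in> set B" using setts tin by blast
      then show "\<exists>j. 2 ^ j \<le> length ts \<and> tdist (glue ts) (rv (glue ts)) (rv t) \<le> 2 * j"
      proof cases
        case 1 then show ?thesis using kl by (intro exI[of _ 0]) (simp add: gp tdist_refl)
      next
        case 2
        then obtain j where j: "2 ^ j \<le> length A" "tdist L (rv L) (rv t) \<le> 2 * j" using ihL by blast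
        have tne: "t \<noteq> Leaf" using 2 pA by (auto simp: shp_def)
        have rvtL: "rv t \<in> set_tree L" using ihL 2 rv_in[OF tne] by blast
        then have Lne: "L \<noteq> Leaf" by auto
        have rvLL: "rv L \<in> set_tree L" using rv_in[OF Lne] .
        have sub: "tedges L \<subseteq> tedges (glue ts)" using H(4) g by simp
        have d1: "tdist (glue ts) (rv L) (rv t) \<le> tdist L (rv L) (rv t)"
          by (rule sub_dist[OF sub rvLL rvtL])
        have d2: "tdist (glue ts) (rv p) (rv L) \<le> 2" using H(7)[OF Lne] g by simp
        have st: "set_tree (glue ts) = set_tree L \<union> set_tree p \<union> set_tree R" using H(2) g by simp
        have d3: "tdist (glue ts) (rv p) (rv t) \<le> tdist (glue ts) (rv p) (rv L) + tdist (glue ts) (rv L) (rv t)"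
          by (rule tdist_tri) (simp_all add: st rvLL rvtL rv_in[OF pne])
        have "2 ^ Suc j \<le> length ts" using j(1) lenL by simp
        moreover have "tdist (glue ts) (rv (glue ts)) (rv t) \<le> 2 * Suc j" using d1 d2 d3 j(2) gp by simp
        ultimately show ?thesis by blast
      next
        case 3
        then obtain j where j: "2 ^ j \<le> length B" "tdist R (rv R) (rv t) \<le> 2 * j" using ihR by blast
        have tne: "t \<noteq> Leaf" using 3 pB by (auto simp: shp_def)
        have rvtR: "rv t \<in> set_tree R" using ihR 3 rv_in[OF tne] by blast
        then have Rne: "R \<noteq> Leaf" by auto
        have rvRR: "rv R \<in> set_tree R" using rv_in[OF Rne] .
        have sub: "tedges R \<subseteq> tedges (glue ts)" using H(5) g by simp
        have d1: "tdist (glue ts) (rv R) (rv t) \<le> tdist R (rv R) (rv t)"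
          by (rule sub_dist[OF sub rvRR rvtR])
        have d2: "tdist (glue ts) (rv p) (rv R) \<le> 2" using H(8)[OF Rne] g by simp
        have st: "set_tree (glue ts) = set_tree L \<union> set_tree p \<union> set_tree R" using H(2) g by simp
        have d3: "tdist (glue ts) (rv p) (rv t) \<le> tdist (glue ts) (rv p) (rv R) + tdist (glue ts) (rv R) (rv t)"
          by (rule tdist_tri) (simp_all add: st rvRR rvtR rv_in[OF pne])
        have "2 ^ Suc j \<le> length ts" using j(1) lenR by simp
        moreover have "tdist (glue ts) (rv (glue ts)) (rv t) \<le> 2 * Suc j" using d1 d2 d3 j(2) gp by simp
        ultimately show ?thesis by blast
      qed
    qed
    have edges: "\<forall>t\<in>set ts. tedges t \<subseteq> tedges (glue ts)"
    proof
      fix t assume tin: "t \<in> set ts"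
      consider "t = p" | "t \<in> set A" | "t \<in> set B" using setts tin by blast
      then show "tedges t \<subseteq> tedges (glue ts)"
      proof cases
        case 1 then show ?thesis using H(3) g by simp
      next
        case 2 then have "tedges t \<subseteq> tedges L" using ihL by blast
        then show ?thesis using H(4) g by simp
      next
        case 3 then have "tedges t \<subseteq> tedges R" using ihR by blast
        then show ?thesis using H(5) g by simp
      qed
    qed
    have sets: "set_tree (glue ts) = (\<Union>t\<in>set ts. set_tree t)"
      using H(2) g ihL ihR setts by auto
    have bstg: "bst (glue ts)" using H(1) g by simp
    show ?thesis using bstg sets edges dist by blast
  qed
qed



definition lpart :: "nat tree \<Rightarrow> nat tree \<Rightarrow> nat tree" where
  "lpart t Y = (case t of Node _ m S \<Rightarrow> (case S of Leaf \<Rightarrow> Y | Node M x _ \<Rightarrow> Node M x Y) | Leaf \<Rightarrow> Y)"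
definition rpart :: "nat tree \<Rightarrow> nat tree \<Rightarrow> nat tree" where
  "rpart t G = (case t of Node _ m S \<Rightarrow> (case S of Leaf \<Rightarrow> G | Node M x _ \<Rightarrow> Node G m M) | Leaf \<Rightarrow> G)"
definition tmax :: "nat tree \<Rightarrow> nat" where
  "tmax t = (case t of Node _ m S \<Rightarrow> (case S of Leaf \<Rightarrow> m | Node _ x _ \<Rightarrow> x) | Leaf \<Rightarrow> 0)"

lemma lpart1[simp]: "lpart (Node Leaf m Leaf) Y = Y" by (simp add: lpart_def)
lemma lpart2[simp]: "lpart (Node Leaf m (Node M x Leaf)) Y = Node M x Y" by (simp add: lpart_def)
lemma rpart1[simp]: "rpart (Node Leaf m Leaf) G = G" by (simp add: rpart_def)
lemma rpart2[simp]: "rpart (Node Leaf m (Node M x Leaf)) G = Node G m M" by (simp add: rpart_def)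
lemma tmax1[simp]: "tmax (Node Leaf m Leaf) = m" by (simp add: tmax_def)
lemma tmax2[simp]: "tmax (Node Leaf m (Node M x Leaf)) = x" by (simp add: tmax_def)

lemma shp_cases:
  assumes "shp t"
  obtains (a) m where "t = Node Leaf m Leaf" | (b) m M x where "t = Node Leaf m (Node M x Leaf)"
  using assms unfolding shp_def by blast

lemma shp_basic:
  assumes "shp t" "bst t"
  shows "rv t \<in> set_tree t" "tmax t \<in> set_tree t" "\<forall>x\<in>set_tree t. x \<noteq> rv t \<longrightarrow> rv t < x"
    "\<forall>x\<in>set_tree t. x \<noteq> tmax t \<longrightarrow> x < tmax t"
  using assms by (cases rule: shp_cases[OF assms(1)]; auto)+

lemma edge_sub_Node: "tedges (Node M x Leaf) \<subseteq> tedges (Node M x Y)"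
  by (cases M) auto

lemma lpart_props:
  assumes "shp t" "bst t" "bst Y" "\<forall>x\<in>set_tree t. \<forall>y\<in>set_tree Y. x < y"
  shows "bst (lpart t Y)" "set_tree (lpart t Y) = (set_tree t - {rv t}) \<union> set_tree Y"
    "tedges Y \<subseteq> tedges (lpart t Y)"
    "Y \<noteq> Leaf \<Longrightarrow> lpart t Y \<noteq> Leaf \<and> tdist (lpart t Y) (rv (lpart t Y)) (rv Y) \<le> 1"
    "set_tree t \<noteq> {rv t} \<Longrightarrow> lpart t Y \<noteq> Leaf \<and>
       (\<forall>(u,v)\<in>tedges t. ((if u = rv t then rv (lpart t Y) else u), (if v = rv t then rv (lpart t Y) else v)) \<in> tedges (lpart t Y)
          \<or> (if u = rv t then rv (lpart t Y) else u) = (if v = rv t then rv (lpart t Y) else v))"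
proof -
  note cs = shp_cases[OF assms(1), case_names a b]
  show "bst (lpart t Y)" using assms by (cases rule: cs) auto
  show "set_tree (lpart t Y) = (set_tree t - {rv t}) \<union> set_tree Y" using assms by (cases rule: cs) auto
  show "tedges Y \<subseteq> tedges (lpart t Y)" by (cases rule: cs) auto
  show "Y \<noteq> Leaf \<Longrightarrow> lpart t Y \<noteq> Leaf \<and> tdist (lpart t Y) (rv (lpart t Y)) (rv Y) \<le> 1"
  proof (cases rule: cs)
    case (a m) then show "Y \<noteq> Leaf \<Longrightarrow> ?thesis" by (simp add: tdist_refl)
  next
    case (b m M x)
    assume Y: "Y \<noteq> Leaf"
    have "(x, rv Y) \<in> tedges (Node M x Y)" by (rule tedges_edge_r[OF Y])
    then have "tdist (Node M x Y) x (rv Y) \<le> 1" by (rule tdist_edge)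
    then show ?thesis using b by simp
  qed
  show "set_tree t \<noteq> {rv t} \<Longrightarrow> lpart t Y \<noteq> Leaf \<and>
       (\<forall>(u,v)\<in>tedges t. ((if u = rv t then rv (lpart t Y) else u), (if v = rv t then rv (lpart t Y) else v)) \<in> tedges (lpart t Y)
          \<or> (if u = rv t then rv (lpart t Y) else u) = (if v = rv t then rv (lpart t Y) else v))"
  proof (cases rule: cs)
    case (a m) then show "set_tree t \<noteq> {rv t} \<Longrightarrow> ?thesis" by simp
  next
    case (b m M x)
    have mM: "m \<notin> set_tree M" "m \<noteq> x" using assms(2) b by auto
    have "\<forall>(u,v)\<in>tedges t. ((if u = m then x else u), (if v = m then x else v)) \<in> tedges (Node M x Y)
          \<or> (if u = m then x else u) = (if v = m then x else v)"
    proof (rule ballI)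
      fix p assume pin: "p \<in> tedges t"
      obtain u v where puv: "p = (u, v)" by (cases p)
      have uv: "(u, v) \<in> tedges t" using pin puv by simp
      have "tedges t = tedges (Node M x Leaf) \<union> {(m, x), (x, m)}" using b by simp
      then have "(u,v) \<in> tedges (Node M x Leaf) \<or> (u = m \<and> v = x) \<or> (u = x \<and> v = m)" using uv by blast
      then have res: "((if u = m then x else u), (if v = m then x else v)) \<in> tedges (Node M x Y)
          \<or> (if u = m then x else u) = (if v = m then x else v)"
      proof (elim disjE)
        assume h: "(u,v) \<in> tedges (Node M x Leaf)"
        then have "u \<noteq> m" "v \<noteq> m" using tedges_set[OF h] mM by auto
        then show ?thesis using h edge_sub_Node[of M x Y] by auto
      qed auto
      show "case p of (u, v) \<Rightarrow> ((if u = m then x else u), (if v = m then x else v)) \<in> tedges (Node M x Y)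
          \<or> (if u = m then x else u) = (if v = m then x else v)"
        unfolding puv prod.case by (rule res)
    qed
    then show ?thesis using b by (simp only: lpart2 rv_Node tree.distinct simp_thms)
  qed
qed

lemma rpart_props:
  assumes "shp t" "bst t" "bst G" "\<forall>x\<in>set_tree G. \<forall>y\<in>set_tree t. x < y"
  shows "bst (rpart t G)" "set_tree (rpart t G) = set_tree G \<union> (set_tree t - {tmax t})"
    "tedges G \<subseteq> tedges (rpart t G)"
    "G \<noteq> Leaf \<Longrightarrow> rpart t G \<noteq> Leaf \<and> tdist (rpart t G) (rv (rpart t G)) (rv G) \<le> 1"
    "\<forall>(u,v)\<in>tedges t. ((if u = tmax t then rv t else u), (if v = tmax t then rv t else v)) \<in> tedges (rpart t G)
          \<or> (if u = tmax t then rv t else u) = (if v = tmax t then rv t else v)"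
    "(tmax t = rv t) \<or> (rpart t G \<noteq> Leaf \<and> rv (rpart t G) = rv t)"
proof -
  note cs = shp_cases[OF assms(1), case_names a b]
  show "bst (rpart t G)" using assms by (cases rule: cs) auto
  show "set_tree (rpart t G) = set_tree G \<union> (set_tree t - {tmax t})" using assms by (cases rule: cs) auto
  show "tedges G \<subseteq> tedges (rpart t G)" by (cases rule: cs) auto
  show "(tmax t = rv t) \<or> (rpart t G \<noteq> Leaf \<and> rv (rpart t G) = rv t)" by (cases rule: cs) auto
  show "G \<noteq> Leaf \<Longrightarrow> rpart t G \<noteq> Leaf \<and> tdist (rpart t G) (rv (rpart t G)) (rv G) \<le> 1"
  proof (cases rule: cs)
    case (a m) then show "G \<noteq> Leaf \<Longrightarrow> ?thesis" by (simp add: tdist_refl)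
  next
    case (b m M x)
    assume Gn: "G \<noteq> Leaf"
    have "(m, rv G) \<in> tedges (Node G m M)" by (rule tedges_edge_l[OF Gn])
    then have "tdist (Node G m M) m (rv G) \<le> 1" by (rule tdist_edge)
    then show ?thesis using b by simp
  qed
  show "\<forall>(u,v)\<in>tedges t. ((if u = tmax t then rv t else u), (if v = tmax t then rv t else v)) \<in> tedges (rpart t G)
          \<or> (if u = tmax t then rv t else u) = (if v = tmax t then rv t else v)"
  proof (cases rule: cs)
    case (a m) then show ?thesis by simp
  next
    case (b m M x)
    have xM: "x \<notin> set_tree M" using assms(2) b by auto
    have "\<forall>(u,v)\<in>tedges t. ((if u = x then m else u), (if v = x then m else v)) \<in> tedges (Node G m M)
          \<or> (if u = x then m else u) = (if v = x then m else v)"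
    proof (rule ballI)
      fix p assume pin: "p \<in> tedges t"
      obtain u v where puv: "p = (u, v)" by (cases p)
      have uv: "(u, v) \<in> tedges t" using pin puv by simp
      have "tedges t = tedges M \<union> (case M of Leaf \<Rightarrow> {} | Node _ y _ \<Rightarrow> {(x,y),(y,x)}) \<union> {(m, x), (x, m)}" using b by simp
      then have "(u,v) \<in> tedges M \<or> (M \<noteq> Leaf \<and> u = x \<and> v = rv M) \<or> (M \<noteq> Leaf \<and> u = rv M \<and> v = x) \<or> (u = m \<and> v = x) \<or> (u = x \<and> v = m)"
        using uv by (cases M) auto
      then have res: "((if u = x then m else u), (if v = x then m else v)) \<in> tedges (Node G m M)
          \<or> (if u = x then m else u) = (if v = x then m else v)"
      proof (elim disjE)
        assume h: "(u,v) \<in> tedges M"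
        then have "u \<noteq> x" "v \<noteq> x" using tedges_set[OF h] xM by auto
        then show ?thesis using h tedges_sub_r[of M G m] by auto
      next
        assume h: "M \<noteq> Leaf \<and> u = x \<and> v = rv M"
        have "rv M \<in> set_tree M" using h rv_in by blast
        then have "rv M \<noteq> x" using xM by auto
        then show ?thesis using h tedges_edge_r[of M m G] by auto
      next
        assume h: "M \<noteq> Leaf \<and> u = rv M \<and> v = x"
        have "rv M \<in> set_tree M" using h rv_in by blast
        then have "rv M \<noteq> x" using xM by auto
        then show ?thesis using h tedges_sym[OF tedges_edge_r[of M m G]] by auto
      qed auto
      show "case p of (u, v) \<Rightarrow> ((if u = x then m else u), (if v = x then m else v)) \<in> tedges (Node G m M)
          \<or> (if u = x then m else u) = (if v = x then m else v)"
        unfolding puv prod.case by (rule res)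
    qed
    then show ?thesis using b by (simp only: rpart2 tmax2 rv_Node)
  qed
qed

lemma transfer:
  assumes hom: "\<forall>(u,v)\<in>tedges t. (f u, f v) \<in> tedges t' \<or> f u = f v"
    and fx: "\<forall>x\<in>set_tree t. f x \<in> set_tree t' \<and> x \<in> set_tree t' \<and> tdist t' x (f x) \<le> (if x = e then D else 0)"
  shows "\<forall>x\<in>set_tree t. \<forall>y\<in>set_tree t. tdist t' x y \<le> tdist t x y + D * ((if x = e then 1 else 0) + (if y = e then 1 else 0))"
proof (intro ballI)
  fix x y assume x: "x \<in> set_tree t" and y: "y \<in> set_tree t"
  have fx1: "f x \<in> set_tree t'" "x \<in> set_tree t'" "tdist t' x (f x) \<le> (if x = e then D else 0)" using fx x by auto
  have fy1: "f y \<in> set_tree t'" "y \<in> set_tree t'" "tdist t' y (f y) \<le> (if y = e then D else 0)" using fx y by auto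
  have "tdist t' x y \<le> tdist t' x (f x) + tdist t' (f x) y" by (rule tdist_tri) (use fx1 fy1 in simp_all)
  also have "tdist t' (f x) y \<le> tdist t' (f x) (f y) + tdist t' (f y) y" by (rule tdist_tri) (use fx1 fy1 in simp_all)
  also have "tdist t' (f x) (f y) \<le> tdist t x y" by (rule hom_dist[OF hom x y])
  finally have "tdist t' x y \<le> tdist t' x (f x) + (tdist t x y + tdist t' (f y) y)" by simp
  moreover have "tdist t' (f y) y = tdist t' y (f y)" by (rule tdist_sym)
  ultimately show "tdist t' x y \<le> tdist t x y + D * ((if x = e then 1 else 0) + (if y = e then 1 else 0))"
    using fx1(3) fy1(3) by (simp add: algebra_simps split: if_splits)
qed

lemma count_distinct: "distinct b \<Longrightarrow> count_list b e \<le> 1"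
  by (induction b) (auto simp: count_list_0_iff)

lemma sum_bound:
  assumes "\<forall>b\<in>set bs. f b + c \<le> a * length b + e"
  shows "sum_list (map f bs) + c * length bs \<le> a * length (concat bs) + e * length bs"
  using assms by (induction bs) (auto simp: algebra_simps)



lemma interval_lt:
  assumes "A = {c1..e1::nat}" "B = {c2..e2}" "A \<noteq> {}" "B \<noteq> {}" "A \<inter> B = {}" "Min A \<le> Min B"
  shows "\<forall>x\<in>A. \<forall>y\<in>B. x < y"
proof -
  have c: "c1 \<le> e1" "c2 \<le> e2" using assms(1-4) by auto
  have "Min A = c1" "Min B = c2" using assms(1,2) c by (auto intro: Min_eqI)
  then have "c1 \<le> c2" using assms(6) by simp
  have "e1 < c2"
  proof (rule ccontr)
    assume "\<not> e1 < c2"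
    then have "c2 \<in> A \<inter> B" using assms(1,2) c \<open>c1 \<le> c2\<close> by auto
    then show False using assms(5) by simp
  qed
  then show ?thesis using assms(1,2) by auto
qed

lemma arith_main: "2 \<le> (j::nat) \<Longrightarrow> 12 * j + (j + 1) * (8 + 4 * H) + 2 * (24 + 6 * H) \<le> 2 * (24 + 6 * H) * j"
proof -
  assume "2 \<le> j"
  then obtain i where j: "j = i + 2" by (metis add.commute le_Suc_ex)
  have "4 * (H * i) \<le> 12 * (H * i)" by simp
  then show ?thesis unfolding j by (simp add: algebra_simps)
qed

definition Rlt :: "nat list \<Rightarrow> nat list \<Rightarrow> bool" where
  "Rlt b b' \<longleftrightarrow> (\<forall>x\<in>set b. \<forall>y\<in>set b'. x < y)"

lemma sorted_blocks:
  assumes blk: "\<forall>b\<in>set bs. b \<noteq> [] \<and> (\<exists>c e. set b = {c..e})"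
    and dist: "distinct (concat bs)"
  shows "sorted_wrt Rlt (sort_key (\<lambda>b. Min (set b)) bs)"
proof -
  let ?vs = "sort_key (\<lambda>b. Min (set b)) bs"
  have dj: "\<forall>ys zs. ys \<in> set bs \<and> zs \<in> set bs \<and> ys \<noteq> zs \<longrightarrow> set ys \<inter> set zs = {}"
    and drm: "distinct (removeAll [] bs)" using dist unfolding distinct_concat_iff by auto
  have "removeAll [] bs = bs" using blk by (intro removeAll_id) auto
  then have dbs: "distinct bs" using drm by simp
  have dvs: "distinct ?vs" using dbs by simp
  have svs: "set ?vs = set bs" by simp
  have srt: "sorted (map (\<lambda>b. Min (set b)) ?vs)" by (rule sorted_sort_key)
  show ?thesis unfolding sorted_wrt_iff_nth_less
  proof (intro allI impI)
    fix i j assume ij1: "i < j" and ij2: "j < length ?vs"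
    have ij: "i < j \<and> j < length ?vs" using ij1 ij2 by simp
    have inset: "?vs ! i \<in> set bs" "?vs ! j \<in> set bs" using ij svs by (metis nth_mem order.strict_trans)+
    have ne: "?vs ! i \<noteq> ?vs ! j" using dvs ij by (simp add: nth_eq_iff_index_eq)
    have mn: "Min (set (?vs ! i)) \<le> Min (set (?vs ! j))"
      using sorted_nth_mono[OF srt, of i j] ij by simp
    obtain c1 e1 where i1: "set (?vs ! i) = {c1..e1}" using blk inset by blast
    obtain c2 e2 where j1: "set (?vs ! j) = {c2..e2}" using blk inset by blast
    have "\<forall>x\<in>set (?vs ! i). \<forall>y\<in>set (?vs ! j). x < y"
      by (rule interval_lt[OF i1 j1]) (use blk inset dj ne mn in auto)
    then show "Rlt (?vs ! i) (?vs ! j)" unfolding Rlt_def .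
  qed
qed



definition good :: "nat \<Rightarrow> nat list \<Rightarrow> nat tree \<Rightarrow> bool" where
  "good K b t \<longleftrightarrow> bst t \<and> set_tree t = set b \<and> shp t \<and> pathcost t (rv t # b @ [rv t]) + 2 * K \<le> 2 * K * length b"

lemma block_tour:
  assumes tr: "\<forall>x\<in>set_tree t. \<forall>y\<in>set_tree t. tdist t' x y \<le> tdist t x y + 2 * ((if x = e then 1 else 0) + (if y = e then 1 else 0))"
    and st: "set_tree t = set b" and a: "a \<in> set b" and db: "distinct b"
  shows "pathcost t' (a # b @ [a]) \<le> pathcost t (a # b @ [a]) + 12"
proof -
  have "\<forall>x\<in>set (a # b @ [a]). \<forall>y\<in>set (a # b @ [a]). tdist t' x y \<le> tdist t x y + 2 * ((if x = e then 1 else 0) + (if y = e then 1 else 0))"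
  proof (intro ballI)
    fix x y assume "x \<in> set (a # b @ [a])" "y \<in> set (a # b @ [a])"
    then have "x \<in> set_tree t" "y \<in> set_tree t" using st a by auto
    then show "tdist t' x y \<le> tdist t x y + 2 * ((if x = e then 1 else 0) + (if y = e then 1 else 0))"
      using tr by blast
  qed
  then have "pathcost t' (a # b @ [a]) \<le> pathcost t (a # b @ [a]) + 2 * 2 * count_list (a # b @ [a]) e"
    by (rule pc_transfer)
  moreover have "count_list (a # b @ [a]) e \<le> 3" using count_distinct[OF db, of e] by simp
  ultimately show ?thesis by simp
qed



lemma hom_mono:
  assumes "\<forall>(u,v)\<in>E. (f u, f v) \<in> A \<or> f u = f v" "A \<subseteq> B"
  shows "\<forall>(u,v)\<in>E. (f u, f v) \<in> B \<or> f u = f v"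
  using assms by fast

lemma combine:
  fixes bs :: "nat list list" and T :: "nat list \<Rightarrow> nat tree"
  assumes len: "2 \<le> length bs" "length bs \<le> 2 ^ H"
    and blk: "\<forall>b\<in>set bs. b \<noteq> [] \<and> distinct b \<and> (\<exists>c e. set b = {c..e})"
    and gd: "\<forall>b\<in>set bs. good (24 + 6 * H) b (T b)"
    and dist: "distinct (concat bs)"
  shows "\<exists>t. good (24 + 6 * H) (concat bs) t"
proof -
  define K where "K = 24 + 6 * H"
  define vs where "vs = sort_key (\<lambda>b. Min (set b)) bs"
  have svs: "set vs = set bs" unfolding vs_def by simp
  have lvs: "length vs = length bs" unfolding vs_def by simp
  have swv: "sorted_wrt Rlt vs" unfolding vs_def by (rule sorted_blocks) (use blk dist in auto)
  define v1 where "v1 = hd vs"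
  define vj where "vj = last vs"
  define mids where "mids = butlast (tl vs)"
  have vsd: "vs = v1 # mids @ [vj]"
  proof -
    have "vs \<noteq> []" using lvs len by auto
    then have a: "vs = hd vs # tl vs" by simp
    have "tl vs \<noteq> []" using lvs len by (cases vs) auto
    then have b: "tl vs = butlast (tl vs) @ [last (tl vs)]" by simp
    have "last (tl vs) = last vs" using \<open>tl vs \<noteq> []\<close> a by (metis last_ConsR)
    then show ?thesis using a b unfolding v1_def vj_def mids_def by simp
  qed
  have "set vs = {v1} \<union> set mids \<union> {vj}" by (subst vsd) auto
  then have setbs: "set bs = {v1} \<union> set mids \<union> {vj}" using svs by simp
  have "length vs = length mids + 2" using vsd by (metis length_Cons length_append_singleton add_2_eq_Suc')
  then have lmids: "length mids \<le> 2 ^ H" using lvs len by linarith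
  have R1j: "Rlt v1 vj" and R1m: "\<forall>b\<in>set mids. Rlt v1 b" and Rmj: "\<forall>b\<in>set mids. Rlt b vj"
    and swm: "sorted_wrt Rlt mids"
    using swv unfolding vsd by (auto simp: sorted_wrt_append)
  have gd1: "good K v1 (T v1)" and gdj: "good K vj (T vj)" and gdm: "\<forall>b\<in>set mids. good K b (T b)"
    using gd setbs unfolding K_def by auto
  define t1 where "t1 = T v1"
  define tj where "tj = T vj"
  define ts where "ts = map T mids"
  define G where "G = glue ts"
  define Y where "Y = rpart tj G"
  define X where "X = lpart t1 Y"
  define top where "top = tmax tj"
  define m1 where "m1 = rv t1"
  define TB where "TB = Node Leaf m1 (Node X top Leaf)"
  have t1p: "bst t1" "set_tree t1 = set v1" "shp t1" using gd1 unfolding good_def t1_def by auto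
  have tjp: "bst tj" "set_tree tj = set vj" "shp tj" using gdj unfolding good_def tj_def by auto
  have tsp: "\<forall>t\<in>set ts. shp t \<and> bst t" using gdm unfolding ts_def good_def by auto
  have tsset: "\<forall>b\<in>set mids. set_tree (T b) = set b" using gdm unfolding good_def by auto
  have tss: "sorted_wrt lt_tree ts"
    unfolding ts_def sorted_wrt_map
    by (rule sorted_wrt_mono_rel[OF _ swm]) (use tsset in \<open>auto simp: Rlt_def lt_tree_def\<close>)
  note GP = glue_props[OF tsp tss, folded G_def]
  have Gset: "set_tree G = (\<Union>b\<in>set mids. set b)" using GP tsset unfolding ts_def by auto
  have Gj: "\<forall>x\<in>set_tree G. \<forall>y\<in>set_tree tj. x < y" using Gset Rmj tjp(2) unfolding Rlt_def by auto
  note RP = rpart_props[OF tjp(3) tjp(1) conjunct1[OF GP] Gj, folded Y_def]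
  have Yset: "set_tree Y = set_tree G \<union> (set vj - {top})" using RP(2) tjp(2) top_def by simp
  have t1Y: "\<forall>x\<in>set_tree t1. \<forall>y\<in>set_tree Y. x < y" using Yset Gset R1m R1j t1p(2) unfolding Rlt_def by auto
  note LP = lpart_props[OF t1p(3) t1p(1) RP(1) t1Y, folded X_def]
  have Xset: "set_tree X = (set v1 - {m1}) \<union> set_tree Y" using LP(2) t1p(2) m1_def by simp
  note B1 = shp_basic[OF t1p(3) t1p(1)]
  note Bj = shp_basic[OF tjp(3) tjp(1)]
  have m1in: "m1 \<in> set v1" using B1 t1p(2) m1_def by simp
  have topin: "top \<in> set vj" using Bj tjp(2) top_def by simp
  have bstX: "bst X" by (rule LP(1))
  have m1X: "\<forall>x\<in>set_tree X. m1 < x"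
  proof
    fix x assume "x \<in> set_tree X"
    then have "(x \<in> set v1 \<and> x \<noteq> m1) \<or> x \<in> set_tree Y" using Xset by auto
    then show "m1 < x"
    proof
      assume "x \<in> set v1 \<and> x \<noteq> m1" then show ?thesis using B1(3) t1p(2) m1_def by auto
    next
      assume "x \<in> set_tree Y" then show ?thesis using t1Y B1(1) m1_def by auto
    qed
  qed
  have Xtop: "\<forall>x\<in>set_tree X. x < top"
  proof
    fix x assume "x \<in> set_tree X"
    then have "x \<in> set v1 \<or> x \<in> set_tree G \<or> (x \<in> set vj \<and> x \<noteq> top)" using Xset Yset by auto
    then show "x < top"
    proof (elim disjE)
      assume "x \<in> set v1" then show ?thesis using R1j topin unfolding Rlt_def by auto
    next
      assume "x \<in> set_tree G" then show ?thesis using Gj Bj(2) top_def by auto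
    next
      assume "x \<in> set vj \<and> x \<noteq> top" then show ?thesis using Bj(4) tjp(2) top_def by auto
    qed
  qed
  have m1top: "m1 < top" using R1j m1in topin unfolding Rlt_def by auto
  have bstTB: "bst TB" unfolding TB_def using bstX m1X Xtop m1top by auto
  have setTB: "set_tree TB = set (concat bs)"
  proof -
    have "set_tree TB = {m1} \<union> set_tree X \<union> {top}" unfolding TB_def by auto
    also have "\<dots> = set v1 \<union> (\<Union>b\<in>set mids. set b) \<union> set vj" using Xset Yset Gset m1in topin by auto
    also have "\<dots> = (\<Union>b\<in>set bs. set b)" using setbs by auto
    finally show ?thesis by simp
  qed
  have shpTB: "shp TB" unfolding TB_def shp_def by auto
  have rvTB: "rv TB = m1" unfolding TB_def by simp
  have EX: "tedges X \<subseteq> tedges TB" unfolding TB_def using tedges_sub_l[of X top Leaf] tedges_sub_r[of "Node X top Leaf" Leaf m1] by (rule subset_trans)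
  have EY: "tedges Y \<subseteq> tedges TB" using LP(3) EX by (rule subset_trans)
  have EG: "tedges G \<subseteq> tedges TB" using RP(3) EY by (rule subset_trans)
  have sX: "set_tree X \<subseteq> set_tree TB" unfolding TB_def by auto
  have sY: "set_tree Y \<subseteq> set_tree TB" using sX Xset by auto
  have sG: "set_tree G \<subseteq> set_tree TB" using sY Yset by auto
  have m1TB: "m1 \<in> set_tree TB" and topTB: "top \<in> set_tree TB" unfolding TB_def by auto
  have d_m1_top: "tdist TB m1 top \<le> 1"
  proof -
    have "(m1, rv (Node X top Leaf)) \<in> tedges (Node Leaf m1 (Node X top Leaf))" by (rule tedges_edge_r) simp
    then have "(m1, top) \<in> tedges TB" unfolding TB_def by simp
    then show ?thesis by (rule tdist_edge)
  qed
  have d_top_X: "X \<noteq> Leaf \<Longrightarrow> tdist TB top (rv X) \<le> 1"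
  proof -
    assume Xn: "X \<noteq> Leaf"
    have "(top, rv X) \<in> tedges (Node X top Leaf)" by (rule tedges_edge_l[OF Xn])
    then have "(top, rv X) \<in> tedges TB" unfolding TB_def using tedges_sub_r[of "Node X top Leaf" Leaf m1] by blast
    then show ?thesis by (rule tdist_edge)
  qed
  have d_X_Y: "Y \<noteq> Leaf \<Longrightarrow> X \<noteq> Leaf \<and> tdist TB (rv X) (rv Y) \<le> 1"
  proof -
    assume Yn: "Y \<noteq> Leaf"
    have h: "X \<noteq> Leaf" "tdist X (rv X) (rv Y) \<le> 1" using LP(4)[OF Yn] by auto
    have "rv X \<in> set_tree X" by (rule rv_in[OF h(1)])
    moreover have "rv Y \<in> set_tree X" using rv_in[OF Yn] Xset by auto
    ultimately have "tdist TB (rv X) (rv Y) \<le> tdist X (rv X) (rv Y)" by (rule sub_dist[OF EX])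
    then show ?thesis using h by simp
  qed
  have d_Y_G: "G \<noteq> Leaf \<Longrightarrow> Y \<noteq> Leaf \<and> tdist TB (rv Y) (rv G) \<le> 1"
  proof -
    assume Gn: "G \<noteq> Leaf"
    have h: "Y \<noteq> Leaf" "tdist Y (rv Y) (rv G) \<le> 1" using RP(4)[OF Gn] by auto
    have "rv Y \<in> set_tree Y" by (rule rv_in[OF h(1)])
    moreover have "rv G \<in> set_tree Y" using rv_in[OF Gn] Yset by auto
    ultimately have "tdist TB (rv Y) (rv G) \<le> tdist Y (rv Y) (rv G)" by (rule sub_dist[OF EY])
    then show ?thesis using h by simp
  qed
  have d_m1_Y: "Y \<noteq> Leaf \<Longrightarrow> tdist TB m1 (rv Y) \<le> 3"
  proof -
    assume Yn: "Y \<noteq> Leaf"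
    have h: "X \<noteq> Leaf" "tdist TB (rv X) (rv Y) \<le> 1" using d_X_Y[OF Yn] by auto
    have inX: "rv X \<in> set_tree TB" using rv_in[OF h(1)] sX by auto
    have inY: "rv Y \<in> set_tree TB" using rv_in[OF Yn] sY by auto
    have "tdist TB m1 (rv Y) \<le> tdist TB m1 top + tdist TB top (rv Y)" by (rule tdist_tri[OF m1TB topTB inY])
    also have "tdist TB top (rv Y) \<le> tdist TB top (rv X) + tdist TB (rv X) (rv Y)" by (rule tdist_tri[OF topTB inX inY])
    finally show ?thesis using d_m1_top d_top_X[OF h(1)] h(2) by simp
  qed
  have d_top_Y: "Y \<noteq> Leaf \<Longrightarrow> tdist TB top (rv Y) \<le> 2"
  proof -
    assume Yn: "Y \<noteq> Leaf"
    have h: "X \<noteq> Leaf" "tdist TB (rv X) (rv Y) \<le> 1" using d_X_Y[OF Yn] by auto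
    have inX: "rv X \<in> set_tree TB" using rv_in[OF h(1)] sX by auto
    have inY: "rv Y \<in> set_tree TB" using rv_in[OF Yn] sY by auto
    have "tdist TB top (rv Y) \<le> tdist TB top (rv X) + tdist TB (rv X) (rv Y)" by (rule tdist_tri[OF topTB inX inY])
    then show ?thesis using d_top_X[OF h(1)] h(2) by simp
  qed
  have d_m1_G: "G \<noteq> Leaf \<Longrightarrow> tdist TB m1 (rv G) \<le> 4"
  proof -
    assume Gn: "G \<noteq> Leaf"
    have h: "Y \<noteq> Leaf" "tdist TB (rv Y) (rv G) \<le> 1" using d_Y_G[OF Gn] by auto
    have inY: "rv Y \<in> set_tree TB" using rv_in[OF h(1)] sY by auto
    have inG: "rv G \<in> set_tree TB" using rv_in[OF Gn] sG by auto
    have "tdist TB m1 (rv G) \<le> tdist TB m1 (rv Y) + tdist TB (rv Y) (rv G)" by (rule tdist_tri[OF m1TB inY inG])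
    then show ?thesis using d_m1_Y[OF h(1)] h(2) by simp
  qed
  have anc: "\<forall>b\<in>set bs. rv (T b) \<in> set_tree TB \<and> tdist TB m1 (rv (T b)) \<le> 4 + 2 * H"
  proof
    fix b assume bin: "b \<in> set bs"
    then consider "b = v1" | "b = vj" | "b \<in> set mids" using setbs by auto
    then show "rv (T b) \<in> set_tree TB \<and> tdist TB m1 (rv (T b)) \<le> 4 + 2 * H"
    proof cases
      case 1 then show ?thesis using m1TB tdist_refl[of TB m1] unfolding m1_def t1_def by simp
    next
      case 2
      from RP(6) show ?thesis
      proof
        assume "tmax tj = rv tj"
        then have "rv (T b) = top" using 2 unfolding top_def tj_def by simp
        then show ?thesis using topTB d_m1_top by simp
      next
        assume h: "Y \<noteq> Leaf \<and> rv Y = rv tj"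
        have Yn: "Y \<noteq> Leaf" using h unfolding Y_def by simp
        have e: "rv Y = rv (T b)" using h 2 unfolding Y_def tj_def by simp
        have inY: "rv Y \<in> set_tree TB" using rv_in[OF Yn] sY by auto
        show ?thesis using d_m1_Y[OF Yn] inY e by simp
      qed
    next
      case 3
      then have Tin: "T b \<in> set ts" unfolding ts_def by simp
      then obtain k where k: "2 ^ k \<le> length ts" "tdist G (rv G) (rv (T b)) \<le> 2 * k" using GP by blast
      have "2 ^ k \<le> (2::nat) ^ H" by (rule le_trans[OF k(1)]) (simp add: ts_def lmids)
      then have kH: "k \<le> H" by (rule power_le_imp_le_exp[rotated]) simp
      have tbne: "T b \<noteq> Leaf" using tsp Tin by (auto simp: shp_def)
      have inG1: "rv (T b) \<in> set_tree G" using GP Tin rv_in[OF tbne] by blast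
      then have Gn: "G \<noteq> Leaf" by auto
      have inG0: "rv G \<in> set_tree G" by (rule rv_in[OF Gn])
      have d1: "tdist TB (rv G) (rv (T b)) \<le> tdist G (rv G) (rv (T b))" by (rule sub_dist[OF EG inG0 inG1])
      have inTB: "rv (T b) \<in> set_tree TB" "rv G \<in> set_tree TB" using inG1 inG0 sG by auto
      have "tdist TB m1 (rv (T b)) \<le> tdist TB m1 (rv G) + tdist TB (rv G) (rv (T b))"
        by (rule tdist_tri[OF m1TB inTB(2) inTB(1)])
      then show ?thesis using d_m1_G[OF Gn] d1 k(2) kH inTB by simp
    qed
  qed
  have btr: "\<forall>b\<in>set bs. pathcost TB (rv (T b) # b @ [rv (T b)]) \<le> pathcost (T b) (rv (T b) # b @ [rv (T b)]) + 12"
  proof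
    fix b assume bin: "b \<in> set bs"
    have gb: "good K b (T b)" using gd bin unfolding K_def by simp
    have stb: "set_tree (T b) = set b" using gb unfolding good_def by simp
    have shb: "shp (T b)" "bst (T b)" using gb unfolding good_def by auto
    have db: "distinct b" using blk bin by simp
    have ain: "rv (T b) \<in> set b" using shp_basic[OF shb] stb by simp
    have sub: "set b \<subseteq> set_tree TB" using setTB bin by auto
    have "\<exists>e. \<forall>x\<in>set_tree (T b). \<forall>y\<in>set_tree (T b). tdist TB x y \<le> tdist (T b) x y + 2 * ((if x = e then 1 else 0) + (if y = e then 1 else 0))"
    proof -
      consider "b = v1" | "b = vj" | "b \<in> set mids" using bin setbs by auto
      then show ?thesis
      proof cases
        case 3
        have "tedges (T b) \<subseteq> tedges G" using GP 3 unfolding ts_def by auto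
        then have E: "tedges (T b) \<subseteq> tedges TB" using EG by (rule subset_trans)
        have "\<forall>x\<in>set_tree (T b). \<forall>y\<in>set_tree (T b). tdist TB x y \<le> tdist (T b) x y + 2 * ((if x = 0 then 1 else 0) + (if y = 0 then 1 else 0))"
        proof (intro ballI)
          fix x y assume "x \<in> set_tree (T b)" "y \<in> set_tree (T b)"
          then have "tdist TB x y \<le> tdist (T b) x y" by (rule sub_dist[OF E])
          then show "tdist TB x y \<le> tdist (T b) x y + 2 * ((if x = 0 then 1 else 0) + (if y = 0 then 1 else 0))" by simp
        qed
        then show ?thesis by blast
      next
        case 1
        show ?thesis
        proof (cases "set_tree t1 = {rv t1}")
          case True
          then have "set_tree (T b) = {m1}" using 1 unfolding t1_def m1_def by simp
          then show ?thesis by (auto simp: tdist_refl)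
        next
          case False
          have h: "X \<noteq> Leaf" "\<forall>(u,v)\<in>tedges t1. ((if u = rv t1 then rv X else u), (if v = rv t1 then rv X else v)) \<in> tedges X
              \<or> (if u = rv t1 then rv X else u) = (if v = rv t1 then rv X else v)"
            using LP(5)[OF False] by auto
          define f where "f = (\<lambda>u. if u = m1 then rv X else u)"
          have hom: "\<forall>(u,v)\<in>tedges t1. (f u, f v) \<in> tedges TB \<or> f u = f v"
            unfolding f_def m1_def by (rule hom_mono[where f="\<lambda>u. if u = rv t1 then rv X else u", OF h(2) EX])
          have rvX: "rv X \<in> set_tree TB" using rv_in[OF h(1)] sX by auto
          have dmX: "tdist TB m1 (rv X) \<le> 2"
          proof -
            have "tdist TB m1 (rv X) \<le> tdist TB m1 top + tdist TB top (rv X)" by (rule tdist_tri[OF m1TB topTB rvX])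
            then show ?thesis using d_m1_top d_top_X[OF h(1)] by simp
          qed
          have fx: "\<forall>x\<in>set_tree t1. f x \<in> set_tree TB \<and> x \<in> set_tree TB \<and> tdist TB x (f x) \<le> (if x = m1 then 2 else 0)"
            using rvX dmX setTB t1p(2) setbs by (auto simp: f_def tdist_refl)
          have "\<forall>x\<in>set_tree t1. \<forall>y\<in>set_tree t1. tdist TB x y \<le> tdist t1 x y + 2 * ((if x = m1 then 1 else 0) + (if y = m1 then 1 else 0))"
            by (rule transfer[OF hom fx])
          then show ?thesis using 1 unfolding t1_def by blast
        qed
      next
        case 2
        define f where "f = (\<lambda>u. if u = top then rv tj else u)"
        have hom: "\<forall>(u,v)\<in>tedges tj. (f u, f v) \<in> tedges TB \<or> f u = f v"
          unfolding f_def top_def by (rule hom_mono[where f="\<lambda>u. if u = tmax tj then rv tj else u", OF RP(5) EY])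
        have dtop: "rv tj \<in> set_tree TB \<and> tdist TB top (rv tj) \<le> 2"
          using RP(6)
        proof
          assume "tmax tj = rv tj" then show ?thesis using topTB top_def by (simp add: tdist_refl)
        next
          assume h: "Y \<noteq> Leaf \<and> rv Y = rv tj"
          then have Yn: "Y \<noteq> Leaf" and e: "rv Y = rv tj" unfolding Y_def by auto
          show ?thesis using d_top_Y[OF Yn] rv_in[OF Yn] sY e by auto
        qed
        have fx: "\<forall>x\<in>set_tree tj. f x \<in> set_tree TB \<and> x \<in> set_tree TB \<and> tdist TB x (f x) \<le> (if x = top then 2 else 0)"
          using dtop setTB tjp(2) setbs by (auto simp: f_def tdist_refl)
        have "\<forall>x\<in>set_tree tj. \<forall>y\<in>set_tree tj. tdist TB x y \<le> tdist tj x y + 2 * ((if x = top then 1 else 0) + (if y = top then 1 else 0))"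
          by (rule transfer[OF hom fx])
        then show ?thesis using 2 unfolding tj_def by blast
      qed
    qed
    then obtain e where "\<forall>x\<in>set_tree (T b). \<forall>y\<in>set_tree (T b). tdist TB x y \<le> tdist (T b) x y + 2 * ((if x = e then 1 else 0) + (if y = e then 1 else 0))" by blast
    then show "pathcost TB (rv (T b) # b @ [rv (T b)]) \<le> pathcost (T b) (rv (T b) # b @ [rv (T b)]) + 12"
      by (rule block_tour[OF _ stb ain db])
  qed
  define \<alpha> where "\<alpha> = (\<lambda>b. rv (T b))"
  have pcc: "pathcost TB (m1 # concat bs @ [m1]) \<le> sum_list (map (\<lambda>b. pathcost TB (\<alpha> b # b @ [\<alpha> b])) bs) + (length bs + 1) * (8 + 4 * H)"
  proof (rule pc_concat)
    show "\<forall>b\<in>set bs. b \<noteq> [] \<and> set b \<subseteq> set_tree TB \<and> \<alpha> b \<in> set_tree TB"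
      using blk setTB anc unfolding \<alpha>_def by auto
    show "m1 \<in> set_tree TB" by (rule m1TB)
    show "m1 \<in> set_tree TB" by (rule m1TB)
    have P: "\<forall>x\<in>{m1, m1} \<union> \<alpha> ` set bs. x \<in> set_tree TB \<and> tdist TB m1 x \<le> 4 + 2 * H"
      using anc m1TB unfolding \<alpha>_def by (auto simp: tdist_refl)
    show "\<forall>x\<in>{m1, m1} \<union> \<alpha> ` set bs. \<forall>y\<in>{m1, m1} \<union> \<alpha> ` set bs. tdist TB x y \<le> 8 + 4 * H"
    proof (intro ballI)
      fix x y assume x: "x \<in> {m1, m1} \<union> \<alpha> ` set bs" and y: "y \<in> {m1, m1} \<union> \<alpha> ` set bs"
      have px: "x \<in> set_tree TB" "tdist TB m1 x \<le> 4 + 2 * H" using P x by auto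
      have py: "y \<in> set_tree TB" "tdist TB m1 y \<le> 4 + 2 * H" using P y by auto
      have "tdist TB x y \<le> tdist TB x m1 + tdist TB m1 y" by (rule tdist_tri[OF px(1) m1TB py(1)])
      then show "tdist TB x y \<le> 8 + 4 * H" using px(2) py(2) by (simp add: tdist_sym[of TB x m1])
    qed
  qed
  have sb: "sum_list (map (\<lambda>b. pathcost TB (\<alpha> b # b @ [\<alpha> b])) bs) + 2 * K * length bs \<le> 2 * K * length (concat bs) + 12 * length bs"
  proof (rule sum_bound, rule ballI)
    fix b assume bin: "b \<in> set bs"
    have "pathcost (T b) (rv (T b) # b @ [rv (T b)]) + 2 * K \<le> 2 * K * length b"
      using gd bin unfolding good_def K_def by simp
    then show "pathcost TB (\<alpha> b # b @ [\<alpha> b]) + 2 * K \<le> 2 * K * length b + 12"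
      using btr bin unfolding \<alpha>_def by fastforce
  qed
  have ar: "12 * length bs + (length bs + 1) * (8 + 4 * H) + 2 * K \<le> 2 * K * length bs"
    unfolding K_def by (rule arith_main[OF len(1)])
  have "pathcost TB (m1 # concat bs @ [m1]) + 2 * K \<le> 2 * K * length (concat bs)"
    using pcc sb ar by linarith
  then have "good K (concat bs) TB" unfolding good_def using bstTB setTB shpTB rvTB by simp
  then show ?thesis unfolding K_def by blast
qed



lemma std_interval:
  assumes "set xs = {c..e}"
  shows "std xs = map (\<lambda>x. x + 1 - c) xs"
  unfolding std_def
proof (rule map_cong[OF refl])
  fix x assume x: "x \<in> set xs"
  then have "c \<le> x" "x \<le> e" using assms by auto
  then have "{y \<in> set xs. y \<le> x} = {c..x}" using assms by auto
  then show "card {y \<in> set xs. y \<le> x} = x + 1 - c" by simp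
qed

lemma std_shift: "std (map (\<lambda>y. y + k) b) = std b"
  unfolding std_def
proof (simp only: map_map o_def, rule map_cong[OF refl])
  fix x assume "x \<in> set b"
  have "{y \<in> set (map (\<lambda>y. y + k) b). y \<le> x + k} = (\<lambda>y. y + k) ` {y \<in> set b. y \<le> x}" by auto
  moreover have "card ((\<lambda>y. y + k) ` {y \<in> set b. y \<le> x}) = card {y \<in> set b. y \<le> x}"
    by (rule card_image) (simp add: inj_on_def)
  ultimately show "card {y \<in> set (map (\<lambda>y. y + k) b). y \<le> x + k} = card {y \<in> set b. y \<le> x}" by simp
qed

lemma std_pos: "z \<in> set (std xs) \<Longrightarrow> 1 \<le> z"
proof -
  assume "z \<in> set (std xs)"
  then obtain x where x: "x \<in> set xs" "z = card {y \<in> set xs. y \<le> x}" unfolding std_def by auto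
  have "x \<in> {y \<in> set xs. y \<le> x}" using x by simp
  moreover have "finite {y \<in> set xs. y \<le> x}" by simp
  ultimately have "card {y \<in> set xs. y \<le> x} > 0" by (metis card_gt_0_iff empty_iff)
  then show ?thesis using x by simp
qed

lemma std_length: "length (std xs) = length xs" unfolding std_def by simp

lemma main_ind:
  assumes "decomposable d ys" "d \<le> 2 ^ H"
  shows "\<forall>xs c e. distinct xs \<longrightarrow> 1 \<le> c \<longrightarrow> set xs = {c..e} \<longrightarrow> std xs = ys \<longrightarrow> (\<exists>t. good (24 + 6 * H) xs t)"
  using assms(1)
proof (induction rule: decomposable.induct)
  case single
  show ?case
  proof (intro allI impI)
    fix xs :: "nat list" and c e :: nat
    assume "std xs = [1]"
    then have "length xs = 1" using std_length[of xs] by simp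
    then obtain x where xs: "xs = [x]" by (metis One_nat_def length_0_conv length_Suc_conv)
    let ?t = "Node Leaf x Leaf"
    have "pathcost ?t (rv ?t # xs @ [rv ?t]) = 0" using xs by (simp add: tdist_refl)
    then have "good (24 + 6 * H) xs ?t" unfolding good_def shp_def using xs by simp
    then show "\<exists>t. good (24 + 6 * H) xs t" by blast
  qed
next
  case (split bs xs0)
  show ?case
  proof (intro allI impI)
    fix xs :: "nat list" and c e :: nat
    assume dxs: "distinct xs" and c1: "1 \<le> c" and sxs: "set xs = {c..e}" and sx: "std xs = xs0"
    define sh where "sh = (\<lambda>y::nat. y + (c - 1))"
    have si: "std xs = map (\<lambda>x. x + 1 - c) xs" by (rule std_interval[OF sxs])
    have "map sh (std xs) = xs" unfolding si map_map o_def sh_def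
    proof (rule map_idI)
      fix x assume "x \<in> set xs" then have "c \<le> x" using sxs by auto
      then show "x + 1 - c + (c - 1) = x" using c1 by simp
    qed
    define bs' where "bs' = map (map sh) bs"
    have cbs': "concat bs' = xs" unfolding bs'_def using \<open>map sh (std xs) = xs\<close> sx split.hyps(1)
      by (simp add: map_concat[symmetric])
    have dist': "distinct (concat bs')" using cbs' dxs by simp
    have hyp: "\<forall>b'\<in>set bs'. \<exists>t. good (24 + 6 * H) b' t"
    proof
      fix b' assume "b' \<in> set bs'"
      then obtain b where b: "b \<in> set bs" "b' = map sh b" unfolding bs'_def by auto
      have bp: "b \<noteq> []" "is_value_interval (set b)"
        "\<forall>xs c e. distinct xs \<longrightarrow> 1 \<le> c \<longrightarrow> set xs = {c..e} \<longrightarrow> std xs = std b \<longrightarrow> (\<exists>t. good (24 + 6 * H) xs t)"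
        using split.IH b(1) by auto
      obtain c' e' where ce: "c' \<le> e'" "set b = {c'..e'}" using bp(2) unfolding is_value_interval_def by auto
      have "c' \<in> set b" using ce by simp
      then have "c' \<in> set (concat bs)" using b(1) by auto
      then have "c' \<in> set (std xs)" using sx split.hyps(1) by simp
      then have c'1: "1 \<le> c'" by (rule std_pos)
      have db': "distinct b'" using dist' \<open>b' \<in> set bs'\<close> unfolding distinct_concat_iff by auto
      have sb': "set b' = {c' + (c - 1)..e' + (c - 1)}" unfolding b(2) sh_def using ce(2)
        by (simp add: image_add_atLeastAtMost)
      have stb': "std b' = std b" unfolding b(2) sh_def by (rule std_shift)
      have c2: "1 \<le> c' + (c - 1)" using c'1 by simp
      show "\<exists>t. good (24 + 6 * H) b' t" by (rule bp(3)[rule_format, OF db' c2 sb' stb'])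
    qed
    then obtain T where T: "\<forall>b'\<in>set bs'. good (24 + 6 * H) b' (T b')" by metis
    have "\<exists>t. good (24 + 6 * H) (concat bs') t"
    proof (rule combine[where T = T])
      show "2 \<le> length bs'" using split.hyps(2) unfolding bs'_def by simp
      show "length bs' \<le> 2 ^ H" using split.hyps(3) assms(2) unfolding bs'_def by simp
      show "\<forall>b\<in>set bs'. b \<noteq> [] \<and> distinct b \<and> (\<exists>c e. set b = {c..e})"
      proof
        fix b' assume b'in: "b' \<in> set bs'"
        then obtain b where b: "b \<in> set bs" "b' = map sh b" unfolding bs'_def by auto
        have bp: "b \<noteq> []" "is_value_interval (set b)" using split.IH b(1) by auto
        obtain c' e' where ce: "c' \<le> e'" "set b = {c'..e'}" using bp(2) unfolding is_value_interval_def by auto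
        have "set b' = {c' + (c - 1)..e' + (c - 1)}" unfolding b(2) sh_def using ce(2)
          by (simp add: image_add_atLeastAtMost)
        moreover have "distinct b'" using dist' b'in unfolding distinct_concat_iff by auto
        ultimately show "b' \<noteq> [] \<and> distinct b' \<and> (\<exists>c e. set b' = {c..e})" using bp(1) b(2) by auto
      qed
      show "\<forall>b\<in>set bs'. good (24 + 6 * H) b (T b)" by (rule T)
      show "distinct (concat bs')" by (rule dist')
    qed
    then show "\<exists>t. good (24 + 6 * H) xs t" using cbs' by simp
  qed
qed



theorem theorem5:
  shows "\<exists>c::real. c > 0 \<and> (\<forall>(d::nat) (X::nat list). 2 \<le> d \<longrightarrow> is_perm X \<longrightarrow> decomposable d X \<longrightarrow>
           real (F1 X) \<le> c * logp (real d) * real (length X))"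
proof (intro exI[of _ 73] conjI allI impI)
  show "(0::real) < 73" by simp
  fix d :: nat and X :: "nat list"
  assume d2: "2 \<le> d" and perm: "is_perm X" and dec: "decomposable d X"
  define n where "n = length X"
  define L where "L = log 2 (real d)"
  define H where "H = nat \<lceil>L\<rceil>"
  have L1: "1 \<le> L"
  proof -
    have "log 2 (2::real) \<le> log 2 (real d)" using d2 by (subst log_le_cancel_iff) auto
    then show ?thesis unfolding L_def by simp
  qed
  have logp: "logp (real d) = L" unfolding logp_def L_def using d2 by (simp add: max_def)
  have HL: "L \<le> real H" unfolding H_def by (rule real_nat_ceiling_ge)
  have HL2: "real H \<le> L + 1"
  proof -
    have "\<lceil>L\<rceil> \<ge> 0" using L1 by simp
    then have "real H = real_of_int \<lceil>L\<rceil>" unfolding H_def by simp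
    also have "\<dots> \<le> L + 1" by (rule of_int_ceiling_le_add_one)
    finally show ?thesis .
  qed
  have dH: "d \<le> 2 ^ H"
  proof -
    have "real d = 2 powr L" unfolding L_def using d2 by simp
    also have "\<dots> \<le> 2 powr (real H)" using HL by (intro powr_mono) auto
    also have "\<dots> = 2 ^ H" by (simp add: powr_realpow)
    finally have "real d \<le> real ((2::nat) ^ H)" by simp
    then show ?thesis by (simp only: of_nat_le_iff)
  qed
  have sX: "set X = {1..n}" and dX: "distinct X" using perm unfolding is_perm_def n_def by auto
  have stdX: "std X = X" using std_interval[OF sX] by simp
  obtain t where gt: "good (24 + 6 * H) X t"
    using main_ind[OF dec dH] dX sX stdX by blast
  have tp: "bst t" "set_tree t = set X" "shp t" and pc: "pathcost t (rv t # X @ [rv t]) + 2 * (24 + 6 * H) \<le> 2 * (24 + 6 * H) * n"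
    using gt unfolding good_def n_def by auto
  have rvin: "rv t \<in> set_tree t" using shp_basic[OF tp(3) tp(1)] by simp
  have fc: "finger_cost t (rv t) X \<le> n + 2 * (24 + 6 * H) * n"
  proof -
    have "finger_cost t (rv t) X = n + pathcost t (rv t # X)" unfolding n_def by (rule finger_cost_pc)
    also have "pathcost t (rv t # X) \<le> pathcost t ((rv t # X) @ [rv t])" by (rule pc_mono_app)
    finally show ?thesis using pc by simp
  qed
  have mem: "finger_cost t (rv t) X \<in> {finger_cost t l X | t l. bst t \<and> set_tree t = {1..length X} \<and> l \<in> set_tree t}"
    using tp rvin sX n_def by blast
  have "F1 X \<le> finger_cost t (rv t) X" unfolding F1_def Inf_nat_def by (rule Least_le[where P="\<lambda>x. x \<in> {finger_cost t l X | t l. bst t \<and> set_tree t = {1..length X} \<and> l \<in> set_tree t}", OF mem])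
  then have Fn: "F1 X \<le> (49 + 12 * H) * n" using fc by (simp add: algebra_simps)
  then have "real (F1 X) \<le> (49 + 12 * real H) * real n"
    by (metis (mono_tags, lifting) of_nat_add of_nat_le_iff of_nat_mult of_nat_numeral)
  also have "\<dots> \<le> (73 * L) * real n"
  proof (rule mult_right_mono)
    show "49 + 12 * real H \<le> 73 * L" using HL2 L1 by linarith
  qed simp
  finally show "real (F1 X) \<le> 73 * logp (real d) * real (length X)" unfolding logp n_def by simp
qed


end
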